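(* Let $D$ be an Eulerian digraph (finite, without loops, parallel arcs or digons), let $\mathcal{F}(D)$ be a cycle decomposition of $D$ with associated dicycle intersection graph $CI(D)$, and let $\hat v\in V(CI(D))$ correspond to the dicycle $C_{\hat v}\in\mathcal{F}(D)$. Suppose the subgraph $CI(D)[N[\hat v]]$ of $CI(D)$ induced by the closed neighbourhood $N[\hat v]$ (i.e. $\hat v$ together with all dicycles of $\mathcal{F}(D)$ sharing a vertex with $C_{\hat v}$) is a simple block graph (it has no parallel edges and every block of it is a complete graph). Then $V(C_{\hat v})\subseteq SV(D)$; in particular $SV(D)\neq\emptyset$.
   Context: All digraphs are finite, with no loops, no parallel arcs and no digons (a digon is a pair of arcs $u\to w$, $w\to u$), so every dicycle has length at least $3$. $N^{+}(v)$ is the set of out-neighbours of $v$; $N^{+2}(v)$ is the set of vertices $w\notin N^{+}(v)\cup\{v\}$ such that $u\to w$ is an arc for some $u\in N^{+}(v)$; $SV(D)$ is the set of vertices $v$ with $|N^{+2}(v)|\ge|N^{+}(v)|$. An Eulerian digraph is a (weakly) connected digraph with $d^{+}(x)=d^{-}(x)$ for all vertices $x$. A cycle decomposition $\mathcal{F}(D)$ is a set of dicycles whose arc sets partition $A(D)$. The dicycle intersection graph $CI(D)$ associated with $\mathcal{F}(D)$ is the multigraph with vertex set $\mathcal{F}(D)$ having, for each pair of distinct dicycles $C,C'$ and each vertex of $D$ lying on both, one edge between $C$ and $C'$. A block of a graph is a maximal 2-connected subgraph or a bridge/isolated vertex. *)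

theory Defs
  imports Main
begin

definition digraph :: "'a set \<Rightarrow> ('a \<times> 'a) set \<Rightarrow> bool" where
  "digraph V A \<longleftrightarrow> finite V \<and> A \<subseteq> V \<times> V \<and> (\<forall>x. (x, x) \<notin> A)
      \<and> (\<forall>u w. (u, w) \<in> A \<longrightarrow> (w, u) \<notin> A)"

definition out_nbrs :: "('a \<times> 'a) set \<Rightarrow> 'a \<Rightarrow> 'a set" where
  "out_nbrs A v = {w. (v, w) \<in> A}"

definition in_nbrs :: "('a \<times> 'a) set \<Rightarrow> 'a \<Rightarrow> 'a set" where
  "in_nbrs A v = {u. (u, v) \<in> A}"

definition second_out_nbrs :: "('a \<times> 'a) set \<Rightarrow> 'a \<Rightarrow> 'a set" where
  "second_out_nbrs A v =
     {w. w \<notin> out_nbrs A v \<union> {v} \<and> (\<exists>u \<in> out_nbrs A v. (u, w) \<in> A)}"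

definition SV :: "'a set \<Rightarrow> ('a \<times> 'a) set \<Rightarrow> 'a set" where
  "SV V A = {v \<in> V. card (second_out_nbrs A v) \<ge> card (out_nbrs A v)}"

definition weakly_connected :: "'a set \<Rightarrow> ('a \<times> 'a) set \<Rightarrow> bool" where
  "weakly_connected V A \<longleftrightarrow> V \<noteq> {} \<and> (\<forall>u \<in> V. \<forall>v \<in> V. (u, v) \<in> (A \<union> A\<inverse>)\<^sup>*)"

definition eulerian :: "'a set \<Rightarrow> ('a \<times> 'a) set \<Rightarrow> bool" where
  "eulerian V A \<longleftrightarrow> digraph V A \<and> weakly_connected V A
      \<and> (\<forall>x \<in> V. card (out_nbrs A x) = card (in_nbrs A x))"

text \<open>A dicycle of the digraph, represented by its arc set: the arcs between consecutive
vertices of a cyclic sequence of distinct vertices.\<close>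

definition is_dicycle :: "('a \<times> 'a) set \<Rightarrow> ('a \<times> 'a) set \<Rightarrow> bool" where
  "is_dicycle A C \<longleftrightarrow> C \<subseteq> A \<and> (\<exists>vs. distinct vs \<and> length vs \<ge> 2 \<and>
      C = {(vs ! i, vs ! ((i + 1) mod length vs)) | i. i < length vs})"

definition cyc_verts :: "('a \<times> 'a) set \<Rightarrow> 'a set" where
  "cyc_verts C = fst ` C"

definition cycle_decomposition :: "('a \<times> 'a) set \<Rightarrow> ('a \<times> 'a) set set \<Rightarrow> bool" where
  "cycle_decomposition A F \<longleftrightarrow> (\<forall>C \<in> F. is_dicycle A C)
      \<and> (\<forall>C \<in> F. \<forall>C' \<in> F. C \<noteq> C' \<longrightarrow> C \<inter> C' = {}) \<and> \<Union> F = A"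

text \<open>Dicycle intersection multigraph CI(D): vertex set F, and the number of edges between
distinct C, C' equals the number of common vertices.\<close>

definition CI_mult :: "('a \<times> 'a) set \<Rightarrow> ('a \<times> 'a) set \<Rightarrow> nat" where
  "CI_mult C C' = (if C = C' then 0 else card (cyc_verts C \<inter> cyc_verts C'))"

definition CI_adj :: "('a \<times> 'a) set \<Rightarrow> ('a \<times> 'a) set \<Rightarrow> bool" where
  "CI_adj C C' \<longleftrightarrow> CI_mult C C' > 0"

definition closed_nbhd :: "('a \<times> 'a) set set \<Rightarrow> ('a \<times> 'a) set \<Rightarrow> ('a \<times> 'a) set set" where
  "closed_nbhd F C = insert C {C' \<in> F. CI_adj C C'}"

text \<open>Generic simple-graph notions for a graph given by a vertex set W and a symmetric
irreflexive adjacency relation E; induced subgraphs are given by vertex subsets.\<close>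

definition connected_on :: "('b \<Rightarrow> 'b \<Rightarrow> bool) \<Rightarrow> 'b set \<Rightarrow> bool" where
  "connected_on E S \<longleftrightarrow> (\<forall>u \<in> S. \<forall>v \<in> S.
      (u, v) \<in> {(x, y). x \<in> S \<and> y \<in> S \<and> E x y}\<^sup>*)"

definition nonseparable :: "('b \<Rightarrow> 'b \<Rightarrow> bool) \<Rightarrow> 'b set \<Rightarrow> bool" where
  "nonseparable E B \<longleftrightarrow> B \<noteq> {} \<and> connected_on E B \<and> (\<forall>x \<in> B. connected_on E (B - {x}))"

text \<open>A block: a maximal connected subgraph without a cut vertex (maximal 2-connected
subgraph, bridge, or isolated vertex); such maximal subgraphs are induced.\<close>
definition is_block :: "'b set \<Rightarrow> ('b \<Rightarrow> 'b \<Rightarrow> bool) \<Rightarrow> 'b set \<Rightarrow> bool" where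
  "is_block W E B \<longleftrightarrow> B \<subseteq> W \<and> nonseparable E B
      \<and> (\<forall>B'. B \<subset> B' \<and> B' \<subseteq> W \<longrightarrow> \<not> nonseparable E B')"

definition block_graph :: "'b set \<Rightarrow> ('b \<Rightarrow> 'b \<Rightarrow> bool) \<Rightarrow> bool" where
  "block_graph W E \<longleftrightarrow> (\<forall>B. is_block W E B \<longrightarrow> (\<forall>u \<in> B. \<forall>v \<in> B. u \<noteq> v \<longrightarrow> E u v))"

definition CI_simple_on :: "('a \<times> 'a) set set \<Rightarrow> bool" where
  "CI_simple_on S \<longleftrightarrow> (\<forall>C \<in> S. \<forall>C' \<in> S. CI_mult C C' \<le> 1)"

end

theory Submission
  imports Defs
begin

lemma dicycle_props:
  assumes "is_dicycle A C"
  shows "C \<subseteq> A" "finite C" "C \<noteq> {}"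
    "\<And>v w. (v,w) \<in> C \<Longrightarrow> w \<in> fst ` C"
    "\<And>v w w'. (v,w) \<in> C \<Longrightarrow> (v,w') \<in> C \<Longrightarrow> w = w'"
proof -
  from assms obtain vs where sub: "C \<subseteq> A" and d: "distinct vs" and l: "length vs \<ge> 2"
    and C: "C = {(vs ! i, vs ! ((i + 1) mod length vs)) | i. i < length vs}"
    unfolding is_dicycle_def by blast
  let ?n = "length vs"
  have Ci: "C = (\<lambda>i. (vs ! i, vs ! ((i + 1) mod ?n))) ` {..<?n}" using C by auto
  show "C \<subseteq> A" by fact
  show "finite C" using Ci by simp
  show "C \<noteq> {}" using Ci l by (auto simp: lessThan_empty_iff)
  show "w \<in> fst ` C" if "(v,w) \<in> C" for v w
  proof -
    from that Ci obtain i where i: "i < ?n" "w = vs ! ((i + 1) mod ?n)" by auto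
    let ?j = "(i + 1) mod ?n"
    have "?j < ?n" using l by (intro mod_less_divisor) (cases vs, auto)
    hence "(vs ! ?j, vs ! ((?j + 1) mod ?n)) \<in> C" using Ci by blast
    thus ?thesis using i by force
  qed
  show "w = w'" if "(v,w) \<in> C" "(v,w') \<in> C" for v w w'
  proof -
    from that Ci obtain i i' where i: "i < ?n" "v = vs ! i" "w = vs ! ((i + 1) mod ?n)"
      and i': "i' < ?n" "v = vs ! i'" "w' = vs ! ((i' + 1) mod ?n)" by auto
    have "i = i'" using d i i' nth_eq_iff_index_eq by metis
    thus ?thesis using i i' by simp
  qed
qed

theorem mainTheorem6:
  fixes V :: "'a set" and A :: "('a \<times> 'a) set" and F :: "('a \<times> 'a) set set"
    and Chat :: "('a \<times> 'a) set"
  assumes "eulerian V A"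
    and "cycle_decomposition A F"
    and "Chat \<in> F"
    and "CI_simple_on (closed_nbhd F Chat)"
    and "block_graph (closed_nbhd F Chat) CI_adj"
  shows "cyc_verts Chat \<subseteq> SV V A \<and> SV V A \<noteq> {}"
proof -
  have dg: "digraph V A" using assms(1) unfolding eulerian_def by blast
  hence finV: "finite V" and AV: "A \<subseteq> V \<times> V" and noloop: "\<And>x. (x,x) \<notin> A"
    and nodig: "\<And>u w. (u,w) \<in> A \<Longrightarrow> (w,u) \<notin> A" unfolding digraph_def by auto
  have cyc: "\<And>C. C \<in> F \<Longrightarrow> is_dicycle A C" and disj: "\<And>C C'. C \<in> F \<Longrightarrow> C' \<in> F \<Longrightarrow> C \<noteq> C' \<Longrightarrow> C \<inter> C' = {}"
    and cov: "\<Union> F = A" using assms(2) unfolding cycle_decomposition_def by auto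
  have finA: "finite A" using finV AV by (meson finite_SigmaI finite_subset)
  have finF: "finite F" using cov finA by (metis Sup_upper finite_Pow_iff finite_subset subsetI Pow_iff)
  have main: "v \<in> SV V A" if vC: "v \<in> cyc_verts Chat" for v
  proof -
    define T where "T = {C \<in> F. v \<in> cyc_verts C}"
    have finT: "finite T" using finF T_def by simp
    have Tn: "T \<subseteq> closed_nbhd F Chat"
    proof
      fix C assume "C \<in> T"
      hence CF: "C \<in> F" and vc: "v \<in> cyc_verts C" by (auto simp: T_def)
      show "C \<in> closed_nbhd F Chat"
      proof (cases "C = Chat")
        case True thus ?thesis by (simp add: closed_nbhd_def)
      next
        case False
        have "finite (cyc_verts Chat)" using dicycle_props(2)[OF cyc[OF assms(3)]]
          by (simp add: cyc_verts_def)
        hence "card (cyc_verts Chat \<inter> cyc_verts C) > 0" using vC vc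
          by (metis IntI card_gt_0_iff empty_iff finite_Int)
        thus ?thesis using False CF by (auto simp: closed_nbhd_def CI_adj_def CI_mult_def)
      qed
    qed
    have two: False if "C \<in> T" "C' \<in> T" "C \<noteq> C'" "x \<in> cyc_verts C" "x \<in> cyc_verts C'" "x \<noteq> v" for C C' x
    proof -
      have "CI_mult C C' \<le> 1" using assms(4) Tn that(1,2) unfolding CI_simple_on_def by blast
      hence le: "card (cyc_verts C \<inter> cyc_verts C') \<le> 1" using that(3) by (simp add: CI_mult_def)
      have "finite (cyc_verts C)" using dicycle_props(2)[OF cyc] that(1) by (simp add: T_def cyc_verts_def)
      moreover have "{v, x} \<subseteq> cyc_verts C \<inter> cyc_verts C'" using that T_def by auto
      ultimately have "card {v,x} \<le> card (cyc_verts C \<inter> cyc_verts C')"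
        by (meson card_mono finite_Int)
      thus False using le that(6) by simp
    qed
    define f where "f w = (SOME C. C \<in> F \<and> (v,w) \<in> C)" for w
    have f1: "f w \<in> F \<and> (v,w) \<in> f w" if "w \<in> out_nbrs A v" for w
    proof -
      have "\<exists>C. C \<in> F \<and> (v,w) \<in> C" using that cov by (auto simp: out_nbrs_def)
      thus ?thesis unfolding f_def by (rule someI_ex)
    qed
    have "inj_on f (out_nbrs A v)"
    proof (rule inj_onI)
      fix w w' assume "w \<in> out_nbrs A v" "w' \<in> out_nbrs A v" "f w = f w'"
      thus "w = w'" using f1 dicycle_props(5)[OF cyc] by metis
    qed
    moreover have "f ` out_nbrs A v \<subseteq> T"
      using f1 unfolding T_def cyc_verts_def by force
    ultimately have c1: "card (out_nbrs A v) \<le> card T" using finT by (meson card_inj_on_le)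
    define P where "P C x = (\<exists>w. (v,w) \<in> C \<and> (w,x) \<in> C)" for C x
    define g where "g C = (SOME x. P C x)" for C
    have g1: "P C (g C)" if "C \<in> T" for C
    proof -
      have CF: "C \<in> F" and "v \<in> fst ` C" using that by (auto simp: T_def cyc_verts_def)
      then obtain w where vw: "(v,w) \<in> C" by force
      then have "w \<in> fst ` C" using dicycle_props(4)[OF cyc[OF CF]] by blast
      then obtain x where "(w,x) \<in> C" by force
      hence "\<exists>x. P C x" using vw P_def by blast
      thus ?thesis unfolding g_def by (rule someI_ex)
    qed
    have g2: "g C \<noteq> v \<and> g C \<in> cyc_verts C \<and> g C \<in> second_out_nbrs A v" if CT: "C \<in> T" for C
    proof -
      have CF: "C \<in> F" using CT by (simp add: T_def)
      note cp = dicycle_props[OF cyc[OF CF]]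
      from g1[OF CT] obtain w where vw: "(v,w) \<in> C" and wx: "(w, g C) \<in> C" by (auto simp: P_def)
      have A1: "(v,w) \<in> A" "(w, g C) \<in> A" using vw wx cp(1) by auto
      have nv: "g C \<noteq> v" using A1 nodig by blast
      have nw: "g C \<noteq> w" using A1 noloop by blast
      have xc: "g C \<in> cyc_verts C" using cp(4)[OF wx] by (simp add: cyc_verts_def)
      have "g C \<notin> out_nbrs A v"
      proof
        assume "g C \<in> out_nbrs A v"
        then obtain C' where C'F: "C' \<in> F" and vx: "(v, g C) \<in> C'" using cov by (auto simp: out_nbrs_def)
        show False
        proof (cases "C' = C")
          case True thus False using cp(5)[OF vw] vx nw by blast
        next
          case False
          have "C' \<in> T" using C'F vx by (force simp: T_def cyc_verts_def)
          moreover have "g C \<in> cyc_verts C'" using dicycle_props(4)[OF cyc[OF C'F] vx] by (simp add: cyc_verts_def)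
          ultimately show False using two[OF CT _ _ xc] False nv by metis
        qed
      qed
      moreover have "w \<in> out_nbrs A v" using A1 by (simp add: out_nbrs_def)
      ultimately have "g C \<in> second_out_nbrs A v" using nv A1 by (auto simp: second_out_nbrs_def)
      thus ?thesis using nv xc by blast
    qed
    have "inj_on g T"
    proof (rule inj_onI)
      fix C C' assume a: "C \<in> T" "C' \<in> T" "g C = g C'"
      show "C = C'"
      proof (rule ccontr)
        assume "C \<noteq> C'"
        thus False using two[OF a(1,2)] g2[OF a(1)] g2[OF a(2)] a(3) by metis
      qed
    qed
    moreover have "g ` T \<subseteq> second_out_nbrs A v" using g2 by blast
    moreover have "finite (second_out_nbrs A v)"
      by (rule finite_subset[OF _ finV]) (use AV in \<open>auto simp: second_out_nbrs_def\<close>)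
    ultimately have c2: "card T \<le> card (second_out_nbrs A v)" by (meson card_inj_on_le)
    have "v \<in> V" using vC dicycle_props(1)[OF cyc[OF assms(3)]] AV by (auto simp: cyc_verts_def)
    thus ?thesis using c1 c2 by (simp add: SV_def)
  qed
  have "cyc_verts Chat \<noteq> {}" using dicycle_props(3)[OF cyc[OF assms(3)]] by (simp add: cyc_verts_def)
  thus ?thesis using main by blast
qed

end
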